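(* Let $N$ be a society, $\nabla$ an ES basic fusion operator satisfying (ESF-SD), (ESF-P) and (ESF-I), and $D$ an $N$-coalition. If there exist interpretations $w\ne w'$ and $E_{w,w'},E_{w'}\in\mathcal E$ with $[\![B(E_{w,w'})]\!]=\{w,w'\}$, $[\![B(E_{w'})]\!]=\{w'\}$ such that $D$ is locally decisive for $E_{w,w'}$ against $E_{w'}$, then $D$ is a decisive $N$-coalition (i.e. decisive for $E$ against $E'$ for all $E,E'\in\mathcal E$).
   Context: Setting: epistemic space $(\mathcal E,B,\mathcal L_{\mathcal P})$ ($\mathcal E$ nonempty, $B:\mathcal E\to$ propositional formulas over finite $\mathcal P$, $|\mathcal P|\ge2$, image modulo equivalence exactly the consistent formulas; $[\![\phi]\!]$ models; $\varphi_M$ a formula with models exactly $M$); agents: well-ordered set $\mathcal S$; society: nonempty finite $N\subseteq\mathcal S$; $N$-profile $\Phi:N\to\mathcal E$, $E_i=\Phi(i)$, identified with $E_i$ if $N=\{i\}$; profiles on $\{i_1<\dots<i_n\}$, $\{j_1<\dots<j_m\}$ equivalent if $n=m$ and entries coincide position-wise. ES basic fusion operator: a map $\nabla(\Phi,E)\in\mathcal E$ with (ESF1) $B(\nabla(\Phi,E))\vdash B(E)$; (ESF2) equivalent profiles and $B(E)\equiv B(E')$ give equivalent $B(\nabla)$; (ESF3) if $B(E)\equiv B(E')\wedge B(E'')$ then $B(\nabla(\Phi,E'))\wedge B(E'')\vdash B(\nabla(\Phi,E))$; (ESF4) if moreover $B(\nabla(\Phi,E'))\wedge B(E'')\nvdash\bot$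 then $B(\nabla(\Phi,E))\vdash B(\nabla(\Phi,E'))\wedge B(E'')$. (ESF-SD): for every agent $i$, interpretations $w_1,w_2,w_3$ and $E_{w_1,w_2},E_{w_2,w_3}$ with $[\![B(E_{w_1,w_2})]\!]=\{w_1,w_2\}$, $[\![B(E_{w_2,w_3})]\!]=\{w_2,w_3\}$, there exist $i$-profiles realising each of: (i) $B(\nabla(E_i,E_{w_1,w_2}))\equiv\varphi_{w_1,w_2}$ and $B(\nabla(E_i,E_{w_2,w_3}))\equiv\varphi_{w_2,w_3}$; (ii) $\equiv\varphi_{w_1,w_2}$ and $\equiv\varphi_{w_2}$; (iii) $\equiv\varphi_{w_1}$ and $\equiv\varphi_{w_2,w_3}$; (iv) $\equiv\varphi_{w_1}$ and $\equiv\varphi_{w_2}$. (ESF-P): for every $N$, $N$-profile $\Phi$, $E,E'$: if $\bigwedge_{i\in N}B(\nabla(E_i,E))\nvdash\bot$ and $B(\nabla(E_i,E))\wedge B(E')\vdash\bot$ for all $i\in N$ then $B(\nabla(\Phi,E))\wedge B(E')\vdash\bot$. (ESF-I): for every $N$, $N$-profiles $\Phi,\Phi'$, $E$: if for every $E'$ with $B(E')\vdash B(E)$, $B(\nabla(E_j,E'))\equiv B(\nabla(E'_j,E'))$ for all $j\in N$, then $B(\nabla(\Phi,E))\equiv B(\nabla(\Phi',E))$. An $N$-coalition is a subset $D\subseteq N$. $D$ is locally decisive for $E$ against $E'$ if for every $N$-profile $\Phi$ with (i) $B(\nabla(E_i,E))\wedge B(E')\vdash\bot$ for all $i\in D$,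 (ii) $B(\nabla(E_j,E))\equiv B(E')$ for all $j\in N\setminus D$, (iii) $\bigwedge_{i\in D}B(\nabla(E_i,E))\nvdash\bot$, we have $B(\nabla(\Phi,E))\wedge B(E')\vdash\bot$. $D$ is decisive for $E$ against $E'$ if the same conclusion holds for every $N$-profile satisfying only (i) and (iii). *)

theory Defs
  imports Main
begin

datatype 'p form =
    Atom 'p
  | Bot
  | Neg "'p form"
  | Conj "'p form" "'p form"
  | Disj "'p form" "'p form"
  | Imp "'p form" "'p form"

fun sat :: "'p set \<Rightarrow> 'p form \<Rightarrow> bool" where
  "sat w (Atom p) = (p \<in> w)"
| "sat w Bot = False"
| "sat w (Neg f) = (\<not> sat w f)"
| "sat w (Conj f g) = (sat w f \<and> sat w g)"
| "sat w (Disj f g) = (sat w f \<or> sat w g)"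
| "sat w (Imp f g) = (sat w f \<longrightarrow> sat w g)"

definition models :: "'p form \<Rightarrow> 'p set set" where
  "models f = {w. sat w f}"

definition entails :: "'p form \<Rightarrow> 'p form \<Rightarrow> bool" where
  "entails f g \<longleftrightarrow> models f \<subseteq> models g"

definition fequiv :: "'p form \<Rightarrow> 'p form \<Rightarrow> bool" where
  "fequiv f g \<longleftrightarrow> entails f g \<and> entails g f"

definition consistent :: "'p form \<Rightarrow> bool" where
  "consistent f \<longleftrightarrow> \<not> entails f Bot"

definition Top :: "'p form" where
  "Top = Neg Bot"

definition bigConj :: "'p form list \<Rightarrow> 'p form" where
  "bigConj fs = foldr Conj fs Top"

definition es_space :: "('e \<Rightarrow> 'p::finite form) \<Rightarrow> bool" where
  "es_space B \<longleftrightarrow> card (UNIV :: 'p set) \<ge> 2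
     \<and> (\<forall>e. consistent (B e))
     \<and> (\<forall>f. consistent f \<longrightarrow> (\<exists>e. fequiv (B e) f))"

text \<open>An N-profile is represented by a function 'i \<Rightarrow> 'e, of which only the values on N matter.\<close>
definition society :: "'i set \<Rightarrow> bool" where
  "society N \<longleftrightarrow> finite N \<and> N \<noteq> {}"

definition equiv_profiles :: "'i::wellorder set \<Rightarrow> ('i \<Rightarrow> 'e) \<Rightarrow> 'i set \<Rightarrow> ('i \<Rightarrow> 'e) \<Rightarrow> bool" where
  "equiv_profiles N \<Phi> M \<Psi> \<longleftrightarrow>
     map \<Phi> (sorted_list_of_set N) = map \<Psi> (sorted_list_of_set M)"

text \<open>Fusion with a single-agent profile {i} \<mapsto> Ei (identified with Ei).\<close>
definition single :: "('i set \<Rightarrow> ('i \<Rightarrow> 'e) \<Rightarrow> 'e \<Rightarrow> 'e) \<Rightarrow> 'i \<Rightarrow> 'e \<Rightarrow> 'e \<Rightarrow> 'e" where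
  "single nabla i Ei E = nabla {i} (\<lambda>_. Ei) E"

definition basic_fusion ::
  "('e \<Rightarrow> 'p form) \<Rightarrow> ('i::wellorder set \<Rightarrow> ('i \<Rightarrow> 'e) \<Rightarrow> 'e \<Rightarrow> 'e) \<Rightarrow> bool" where
  "basic_fusion B nabla \<longleftrightarrow>
     (\<forall>N \<Phi> E. society N \<longrightarrow> entails (B (nabla N \<Phi> E)) (B E))
   \<and> (\<forall>N \<Phi> M \<Psi> E E'. society N \<longrightarrow> society M \<longrightarrow> equiv_profiles N \<Phi> M \<Psi>
        \<longrightarrow> fequiv (B E) (B E') \<longrightarrow> fequiv (B (nabla N \<Phi> E)) (B (nabla M \<Psi> E')))
   \<and> (\<forall>N \<Phi> E E' E''. society N \<longrightarrow> fequiv (B E) (Conj (B E') (B E''))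
        \<longrightarrow> entails (Conj (B (nabla N \<Phi> E')) (B E'')) (B (nabla N \<Phi> E)))
   \<and> (\<forall>N \<Phi> E E' E''. society N \<longrightarrow> fequiv (B E) (Conj (B E') (B E''))
        \<longrightarrow> consistent (Conj (B (nabla N \<Phi> E')) (B E''))
        \<longrightarrow> entails (B (nabla N \<Phi> E)) (Conj (B (nabla N \<Phi> E')) (B E'')))"

definition esf_sd ::
  "('e \<Rightarrow> 'p form) \<Rightarrow> ('i set \<Rightarrow> ('i \<Rightarrow> 'e) \<Rightarrow> 'e \<Rightarrow> 'e) \<Rightarrow> bool" where
  "esf_sd B nabla \<longleftrightarrow>
    (\<forall>i w1 w2 w3 E12 E23. w1 \<noteq> w2 \<longrightarrow> w2 \<noteq> w3 \<longrightarrow> w1 \<noteq> w3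
       \<longrightarrow> models (B E12) = {w1, w2} \<longrightarrow> models (B E23) = {w2, w3} \<longrightarrow>
       (\<exists>Ei. models (B (single nabla i Ei E12)) = {w1, w2}
            \<and> models (B (single nabla i Ei E23)) = {w2, w3})
     \<and> (\<exists>Ei. models (B (single nabla i Ei E12)) = {w1, w2}
            \<and> models (B (single nabla i Ei E23)) = {w2})
     \<and> (\<exists>Ei. models (B (single nabla i Ei E12)) = {w1}
            \<and> models (B (single nabla i Ei E23)) = {w2, w3})
     \<and> (\<exists>Ei. models (B (single nabla i Ei E12)) = {w1}
            \<and> models (B (single nabla i Ei E23)) = {w2}))"

definition esf_p ::
  "('e \<Rightarrow> 'p form) \<Rightarrow> ('i::wellorder set \<Rightarrow> ('i \<Rightarrow> 'e) \<Rightarrow> 'e \<Rightarrow> 'e) \<Rightarrow> bool" where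
  "esf_p B nabla \<longleftrightarrow>
    (\<forall>N \<Phi> E E'. society N \<longrightarrow>
       consistent (bigConj (map (\<lambda>i. B (single nabla i (\<Phi> i) E)) (sorted_list_of_set N)))
       \<longrightarrow> (\<forall>i\<in>N. entails (Conj (B (single nabla i (\<Phi> i) E)) (B E')) Bot)
       \<longrightarrow> entails (Conj (B (nabla N \<Phi> E)) (B E')) Bot)"

definition esf_i ::
  "('e \<Rightarrow> 'p form) \<Rightarrow> ('i set \<Rightarrow> ('i \<Rightarrow> 'e) \<Rightarrow> 'e \<Rightarrow> 'e) \<Rightarrow> bool" where
  "esf_i B nabla \<longleftrightarrow>
    (\<forall>N \<Phi> \<Phi>' E. society N \<longrightarrow>
       (\<forall>E'. entails (B E') (B E) \<longrightarrow>
          (\<forall>j\<in>N. fequiv (B (single nabla j (\<Phi> j) E')) (B (single nabla j (\<Phi>' j) E'))))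
       \<longrightarrow> fequiv (B (nabla N \<Phi> E)) (B (nabla N \<Phi>' E)))"

definition locally_decisive ::
  "('e \<Rightarrow> 'p form) \<Rightarrow> ('i::wellorder set \<Rightarrow> ('i \<Rightarrow> 'e) \<Rightarrow> 'e \<Rightarrow> 'e) \<Rightarrow> 'i set \<Rightarrow> 'i set \<Rightarrow> 'e \<Rightarrow> 'e \<Rightarrow> bool" where
  "locally_decisive B nabla N D E E' \<longleftrightarrow>
    (\<forall>\<Phi>. (\<forall>i\<in>D. entails (Conj (B (single nabla i (\<Phi> i) E)) (B E')) Bot)
       \<longrightarrow> (\<forall>j\<in>N - D. fequiv (B (single nabla j (\<Phi> j) E)) (B E'))
       \<longrightarrow> consistent (bigConj (map (\<lambda>i. B (single nabla i (\<Phi> i) E)) (sorted_list_of_set D)))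
       \<longrightarrow> entails (Conj (B (nabla N \<Phi> E)) (B E')) Bot)"

definition decisive ::
  "('e \<Rightarrow> 'p form) \<Rightarrow> ('i::wellorder set \<Rightarrow> ('i \<Rightarrow> 'e) \<Rightarrow> 'e \<Rightarrow> 'e) \<Rightarrow> 'i set \<Rightarrow> 'i set \<Rightarrow> 'e \<Rightarrow> 'e \<Rightarrow> bool" where
  "decisive B nabla N D E E' \<longleftrightarrow>
    (\<forall>\<Phi>. (\<forall>i\<in>D. entails (Conj (B (single nabla i (\<Phi> i) E)) (B E')) Bot)
       \<longrightarrow> consistent (bigConj (map (\<lambda>i. B (single nabla i (\<Phi> i) E)) (sorted_list_of_set D)))
       \<longrightarrow> entails (Conj (B (nabla N \<Phi> E)) (B E')) Bot)"

end

theory Submission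
  imports Defs
begin

lemma models_Conj: "models (Conj f g) = models f \<inter> models g"
  by (auto simp: models_def)
lemma models_Bot: "models Bot = {}" by (auto simp: models_def)
lemma entails_Bot: "entails f Bot \<longleftrightarrow> models f = {}"
  by (auto simp: entails_def models_def)
lemma consistent_iff: "consistent f \<longleftrightarrow> models f \<noteq> {}"
  by (auto simp: consistent_def entails_def models_def)
lemma fequiv_iff: "fequiv f g \<longleftrightarrow> models f = models g"
  by (auto simp: fequiv_def entails_def)
lemma models_bigConj: "models (bigConj (map g xs)) = {w. \<forall>x\<in>set xs. w \<in> models (g x)}"
  by (induction xs) (auto simp: bigConj_def models_def Top_def)

definition allatoms :: "'p::finite list" where "allatoms = (SOME ps. set ps = UNIV)"
lemma set_allatoms: "set (allatoms :: 'p::finite list) = UNIV"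
  unfolding allatoms_def by (rule someI_ex) (rule finite_list, simp)

definition charf :: "'p::finite set \<Rightarrow> 'p form" where
  "charf w = foldr (\<lambda>p f. Conj (if p \<in> w then Atom p else Neg (Atom p)) f) allatoms Top"
lemma sat_charf_aux: "sat v (foldr (\<lambda>p f. Conj (if p \<in> w then Atom p else Neg (Atom p)) f) ps Top)
   \<longleftrightarrow> (\<forall>p\<in>set ps. p\<in>v \<longleftrightarrow> p\<in>w)"
  by (induction ps) (auto simp: Top_def)
lemma sat_charf: "sat v (charf w) \<longleftrightarrow> v = w"
  using set_allatoms by (auto simp: charf_def sat_charf_aux)

definition setf :: "'p::finite set set \<Rightarrow> 'p form" where
  "setf X = foldr (\<lambda>w f. Disj (charf w) f) (SOME ws. set ws = X) Bot"
lemma sat_setf_aux: "sat v (foldr (\<lambda>w f. Disj (charf w) f) ws Bot) \<longleftrightarrow> v \<in> set ws"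
  by (induction ws) (auto simp: sat_charf)
lemma models_setf: "models (setf (X :: 'p::finite set set)) = X"
proof -
  have "set (SOME ws. set ws = X) = X" by (rule someI_ex) (rule finite_list, simp)
  then show ?thesis by (auto simp: models_def setf_def sat_setf_aux)
qed

locale setting =
  fixes B :: "'e \<Rightarrow> 'p::finite form"
    and nabla :: "'i::wellorder set \<Rightarrow> ('i \<Rightarrow> 'e) \<Rightarrow> 'e \<Rightarrow> 'e"
    and N D :: "'i set"
  assumes es: "es_space B" and bf: "basic_fusion B nabla" and sd: "esf_sd B nabla"
    and P: "esf_p B nabla" and I: "esf_i B nabla" and soc: "society N" and DN: "D \<subseteq> N"
begin

lemma realize: "X \<noteq> {} \<Longrightarrow> \<exists>e. models (B e) = X"
proof -
  assume "X \<noteq> {}"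
  then have "consistent (setf X)" by (simp add: consistent_iff models_setf)
  then obtain e where "fequiv (B e) (setf X)" using es unfolding es_space_def by blast
  then show ?thesis by (auto simp: fequiv_iff models_setf)
qed

definition rep where "rep X = (SOME e. models (B e) = X)"
lemma rep: "X \<noteq> {} \<Longrightarrow> models (B (rep X)) = X"
  unfolding rep_def by (rule someI_ex) (rule realize)

lemma nonempty: "models (B e) \<noteq> {}"
  using es unfolding es_space_def by (simp add: consistent_iff)

definition C where "C S \<Phi> X = models (B (nabla S \<Phi> (rep X)))"
definition c where "c i e X = C {i} (\<lambda>_. e) X"

lemma soc_single: "society {i}" by (simp add: society_def)

lemma C_eq: "society S \<Longrightarrow> models (B E) = X \<Longrightarrow> models (B (nabla S \<Phi> E)) = C S \<Phi> X"
proof -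
  assume s: "society S" and m: "models (B E) = X"
  have "X \<noteq> {}" using m nonempty by auto
  then have "fequiv (B E) (B (rep X))" using m rep by (simp add: fequiv_iff)
  moreover have "equiv_profiles S \<Phi> S \<Phi>" by (simp add: equiv_profiles_def)
  ultimately have "fequiv (B (nabla S \<Phi> E)) (B (nabla S \<Phi> (rep X)))"
    using bf s unfolding basic_fusion_def by blast
  then show ?thesis by (simp add: fequiv_iff C_def)
qed

lemma c_eq: "models (B E) = X \<Longrightarrow> models (B (single nabla i e E)) = c i e X"
  unfolding single_def c_def by (rule C_eq[OF soc_single])

lemma C_sub: "society S \<Longrightarrow> X \<noteq> {} \<Longrightarrow> C S \<Phi> X \<subseteq> X"
  using bf rep unfolding basic_fusion_def C_def entails_def by metis

lemma C_ne: "C S \<Phi> X \<noteq> {}" unfolding C_def by (rule nonempty)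

lemma C_restr:
  assumes s: "society S" and X: "X \<noteq> {}" and XY: "X \<subseteq> Y" and ne: "C S \<Phi> Y \<inter> X \<noteq> {}"
  shows "C S \<Phi> X = C S \<Phi> Y \<inter> X"
proof -
  have Y: "Y \<noteq> {}" using X XY by auto
  have fe: "fequiv (B (rep X)) (Conj (B (rep Y)) (B (rep X)))"
    using rep[OF X] rep[OF Y] XY by (auto simp: fequiv_iff models_Conj)
  have 1: "entails (Conj (B (nabla S \<Phi> (rep Y))) (B (rep X))) (B (nabla S \<Phi> (rep X)))"
    using bf s fe unfolding basic_fusion_def by blast
  have cons: "consistent (Conj (B (nabla S \<Phi> (rep Y))) (B (rep X)))"
    using ne rep[OF X] by (simp add: consistent_iff models_Conj C_def)
  have 2: "entails (B (nabla S \<Phi> (rep X))) (Conj (B (nabla S \<Phi> (rep Y))) (B (rep X)))"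
    using bf s fe cons unfolding basic_fusion_def by blast
  show ?thesis using 1 2 rep[OF X]
    by (auto simp: entails_def models_Conj C_def)
qed

lemma T1:
  assumes s: "society S" and d: "a\<noteq>b" "b\<noteq>z" "a\<noteq>z"
    and h1: "C S \<Phi> {a,b} = {a}" and h2: "b \<in> C S \<Phi> {b,z}"
  shows "C S \<Phi> {a,z} = {a}"
proof -
  let ?T = "C S \<Phi> {a,b,z}"
  have sub: "?T \<subseteq> {a,b,z}" by (rule C_sub[OF s]) simp
  have ne: "?T \<noteq> {}" by (rule C_ne)
  have r1: "?T \<inter> {a,b} \<noteq> {} \<Longrightarrow> C S \<Phi> {a,b} = ?T \<inter> {a,b}" by (rule C_restr[OF s]) auto
  have r2: "?T \<inter> {b,z} \<noteq> {} \<Longrightarrow> C S \<Phi> {b,z} = ?T \<inter> {b,z}" by (rule C_restr[OF s]) auto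
  have r3: "?T \<inter> {a,z} \<noteq> {} \<Longrightarrow> C S \<Phi> {a,z} = ?T \<inter> {a,z}" by (rule C_restr[OF s]) auto
  have nb: "b \<notin> ?T" using r1 h1 d by blast
  have nc: "z \<notin> ?T" using r2 h2 nb by blast
  have a: "a \<in> ?T" using sub ne nb nc by blast
  show ?thesis using r3 a nc by blast
qed

lemma T2:
  assumes s: "society S" and d: "a\<noteq>b" "b\<noteq>z" "a\<noteq>z"
    and h1: "a \<in> C S \<Phi> {a,b}" and h2: "C S \<Phi> {b,z} = {b}"
  shows "C S \<Phi> {a,z} = {a}"
proof -
  let ?T = "C S \<Phi> {a,b,z}"
  have sub: "?T \<subseteq> {a,b,z}" by (rule C_sub[OF s]) simp
  have ne: "?T \<noteq> {}" by (rule C_ne)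
  have r1: "?T \<inter> {a,b} \<noteq> {} \<Longrightarrow> C S \<Phi> {a,b} = ?T \<inter> {a,b}" by (rule C_restr[OF s]) auto
  have r2: "?T \<inter> {b,z} \<noteq> {} \<Longrightarrow> C S \<Phi> {b,z} = ?T \<inter> {b,z}" by (rule C_restr[OF s]) auto
  have r3: "?T \<inter> {a,z} \<noteq> {} \<Longrightarrow> C S \<Phi> {a,z} = ?T \<inter> {a,z}" by (rule C_restr[OF s]) auto
  have nc: "z \<notin> ?T" using r2 h2 d by blast
  have a: "a \<in> ?T"
  proof (rule ccontr)
    assume "a \<notin> ?T"
    then have "?T = {b}" using sub ne nc by blast
    then show False using r1 h1 d by auto
  qed
  show ?thesis using r3 a nc by blast
qed

lemma cT1: "a\<noteq>b \<Longrightarrow> b\<noteq>d \<Longrightarrow> a\<noteq>d \<Longrightarrow> c i e {a,b} = {a} \<Longrightarrow> b \<in> c i e {b,d} \<Longrightarrow> c i e {a,d} = {a}"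
  unfolding c_def by (rule T1[OF soc_single])
lemma cT2: "a\<noteq>b \<Longrightarrow> b\<noteq>d \<Longrightarrow> a\<noteq>d \<Longrightarrow> a \<in> c i e {a,b} \<Longrightarrow> c i e {b,d} = {b} \<Longrightarrow> c i e {a,d} = {a}"
  unfolding c_def by (rule T2[OF soc_single])

lemma c_pair: "c i e {a,b} = {a} \<or> c i e {a,b} = {b} \<or> c i e {a,b} = {a,b}"
  using C_sub[OF soc_single, of "{a,b}" i "\<lambda>_. e"] C_ne[of "{i}" "\<lambda>_. e" "{a,b}"]
  unfolding c_def by blast


lemma SD:
  assumes d: "w1\<noteq>w2" "w2\<noteq>w3" "w1\<noteq>w3"
  shows "(\<exists>e. c i e {w1,w2} = {w1,w2} \<and> c i e {w2,w3} = {w2})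
       \<and> (\<exists>e. c i e {w1,w2} = {w1} \<and> c i e {w2,w3} = {w2,w3})
       \<and> (\<exists>e. c i e {w1,w2} = {w1} \<and> c i e {w2,w3} = {w2})"
proof -
  have m1: "models (B (rep {w1,w2})) = {w1,w2}" by (rule rep) simp
  have m2: "models (B (rep {w2,w3})) = {w2,w3}" by (rule rep) simp
  note h = sd[unfolded esf_sd_def, rule_format, OF d(1) d(2) d(3) m1 m2, of i]
  show ?thesis using h unfolding c_eq[OF m1] c_eq[OF m2] by blast
qed

lemma Pareto:
  assumes ab: "a \<noteq> b" and h: "\<forall>i\<in>N. c i (\<Phi> i) {a,b} = {a}"
  shows "C N \<Phi> {a,b} = {a}"
proof -
  have m1: "models (B (rep {a,b})) = {a,b}" by (rule rep) simp
  have m2: "models (B (rep {b})) = {b}" by (rule rep) simp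
  have fin: "finite N" "N \<noteq> {}" using soc by (auto simp: society_def)
  have mi: "\<And>i. models (B (single nabla i (\<Phi> i) (rep {a,b}))) = c i (\<Phi> i) {a,b}"
    using c_eq[OF m1] by blast
  have "consistent (bigConj (map (\<lambda>i. B (single nabla i (\<Phi> i) (rep {a,b}))) (sorted_list_of_set N)))"
    using fin h by (auto simp: consistent_iff models_bigConj mi)
  moreover have "\<forall>i\<in>N. entails (Conj (B (single nabla i (\<Phi> i) (rep {a,b}))) (B (rep {b}))) Bot"
    using h ab by (simp add: entails_Bot models_Conj mi m2)
  ultimately have "entails (Conj (B (nabla N \<Phi> (rep {a,b}))) (B (rep {b}))) Bot"
    using P[unfolded esf_p_def, rule_format, OF soc, of \<Phi> "rep{a,b}" "rep{b}"] by blast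
  then have "C N \<Phi> {a,b} \<inter> {b} = {}" by (simp add: entails_Bot models_Conj m2 C_def)
  moreover have "C N \<Phi> {a,b} \<subseteq> {a,b}" by (rule C_sub[OF soc]) simp
  moreover note C_ne[of N \<Phi> "{a,b}"]
  ultimately show ?thesis by blast
qed

lemma IIA:
  assumes h: "\<forall>j\<in>N. c j (\<Phi> j) {a,b} = c j (\<Phi>' j) {a,b}"
  shows "C N \<Phi> {a,b} = C N \<Phi>' {a,b}"
proof -
  have m1: "models (B (rep {a,b})) = {a,b}" by (rule rep) simp
  have "\<forall>E'. entails (B E') (B (rep {a,b})) \<longrightarrow>
          (\<forall>j\<in>N. fequiv (B (single nabla j (\<Phi> j) E')) (B (single nabla j (\<Phi>' j) E')))"
  proof (intro allI impI ballI)
    fix E' j assume en: "entails (B E') (B (rep {a,b}))" and j: "j \<in> N"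
    define X where "X = models (B E')"
    have sub: "X \<subseteq> {a,b}" using en m1 by (simp add: entails_def X_def)
    have ne: "X \<noteq> {}" using nonempty X_def by simp
    have cases: "X = {a} \<or> X = {b} \<or> X = {a,b}" using sub ne by blast
    have sgl: "c j e X = X" if X: "X = {u}" for e u
    proof -
      have "c j e X \<subseteq> X" using C_sub[OF soc_single, of X j] ne unfolding c_def by simp
      moreover have "c j e X \<noteq> {}" unfolding c_def by (rule C_ne)
      ultimately show ?thesis using X by auto
    qed
    have eq: "c j (\<Phi> j) X = c j (\<Phi>' j) X"
    proof (cases "X = {a,b}")
      case True then show ?thesis using h j by simp
    next
      case False then obtain u where "X = {u}" using cases by blast
      then show ?thesis using sgl by simp
    qed
    show "fequiv (B (single nabla j (\<Phi> j) E')) (B (single nabla j (\<Phi>' j) E'))"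
      using eq c_eq[OF X_def[symmetric]] by (simp add: fequiv_iff)
  qed
  then have "fequiv (B (nabla N \<Phi> (rep {a,b}))) (B (nabla N \<Phi>' (rep {a,b})))"
    using I[unfolded esf_i_def, rule_format, where \<Phi>=\<Phi> and \<Phi>'=\<Phi>' and E="rep{a,b}", OF soc] by blast
  then show ?thesis by (simp add: fequiv_iff C_def)
qed

definition LDp where "LDp a b \<longleftrightarrow> (\<forall>\<Phi>. (\<forall>i\<in>D. c i (\<Phi> i) {a,b} = {a})
   \<longrightarrow> (\<forall>j\<in>N - D. c j (\<Phi> j) {a,b} = {b}) \<longrightarrow> C N \<Phi> {a,b} = {a})"
definition DDp where "DDp a b \<longleftrightarrow> (\<forall>\<Phi>. (\<forall>i\<in>D. c i (\<Phi> i) {a,b} = {a}) \<longrightarrow> C N \<Phi> {a,b} = {a})"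

lemma DD_LD: "DDp a b \<Longrightarrow> LDp a b" by (auto simp: DDp_def LDp_def)


lemma chII: "w1\<noteq>w2 \<Longrightarrow> w2\<noteq>w3 \<Longrightarrow> w1\<noteq>w3 \<Longrightarrow>
   \<exists>f. \<forall>i. c i (f i) {w1,w2} = {w1,w2} \<and> c i (f i) {w2,w3} = {w2}"
proof -
  assume d: "w1\<noteq>w2" "w2\<noteq>w3" "w1\<noteq>w3"
  have "\<forall>i. \<exists>e. c i e {w1,w2} = {w1,w2} \<and> c i e {w2,w3} = {w2}" using SD[OF d] by blast
  then show ?thesis by (rule choice)
qed
lemma chIII: "w1\<noteq>w2 \<Longrightarrow> w2\<noteq>w3 \<Longrightarrow> w1\<noteq>w3 \<Longrightarrow>
   \<exists>f. \<forall>i. c i (f i) {w1,w2} = {w1} \<and> c i (f i) {w2,w3} = {w2,w3}"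
proof -
  assume d: "w1\<noteq>w2" "w2\<noteq>w3" "w1\<noteq>w3"
  have "\<forall>i. \<exists>e. c i e {w1,w2} = {w1} \<and> c i e {w2,w3} = {w2,w3}" using SD[OF d] by blast
  then show ?thesis by (rule choice)
qed
lemma chIV: "w1\<noteq>w2 \<Longrightarrow> w2\<noteq>w3 \<Longrightarrow> w1\<noteq>w3 \<Longrightarrow>
   \<exists>f. \<forall>i. c i (f i) {w1,w2} = {w1} \<and> c i (f i) {w2,w3} = {w2}"
proof -
  assume d: "w1\<noteq>w2" "w2\<noteq>w3" "w1\<noteq>w3"
  have "\<forall>i. \<exists>e. c i e {w1,w2} = {w1} \<and> c i e {w2,w3} = {w2}" using SD[OF d] by blast
  then show ?thesis by (rule choice)
qed

lemma stepA:
  assumes LD: "LDp x y" and d: "x\<noteq>y" "z\<noteq>x" "z\<noteq>y"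
  shows "DDp x z"
  unfolding DDp_def
proof (intro allI impI)
  fix \<Phi> assume hD: "\<forall>i\<in>D. c i (\<Phi> i) {x,z} = {x}"
  obtain eD where eD: "\<forall>i. c i (eD i) {x,y} = {x} \<and> c i (eD i) {y,z} = {y}" using chIV[of x y z] d by metis
  obtain e1 where e1: "\<forall>i. c i (e1 i) {y,x} = {y} \<and> c i (e1 i) {x,z} = {x}" using chIV[of y x z] d by metis
  obtain e2 where e2: "\<forall>i. c i (e2 i) {y,x} = {y} \<and> c i (e2 i) {x,z} = {x,z}" using chIII[of y x z] d by metis
  obtain e3 where e3: "\<forall>i. c i (e3 i) {y,z} = {y} \<and> c i (e3 i) {z,x} = {z}" using chIV[of y z x] d by metis
  define \<Phi>' where "\<Phi>' = (\<lambda>i. if i\<in>D then eD i else if c i (\<Phi> i) {x,z} = {x} then e1 i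
      else if c i (\<Phi> i) {x,z} = {x,z} then e2 i else e3 i)"
  have agree: "\<forall>j\<in>N. c j (\<Phi> j) {x,z} = c j (\<Phi>' j) {x,z}"
  proof
    fix j assume j: "j\<in>N"
    show "c j (\<Phi> j) {x,z} = c j (\<Phi>' j) {x,z}"
    proof (cases "j\<in>D")
      case True
      have "c j (eD j) {x,z} = {x}" using cT1[of x y z j "eD j"] eD d by auto
      then show ?thesis using True hD by (simp add: \<Phi>'_def)
    next
      case False
      consider "c j (\<Phi> j) {x,z} = {x}" | "c j (\<Phi> j) {x,z} = {z}" | "c j (\<Phi> j) {x,z} = {x,z}"
        using c_pair by blast
      then show ?thesis
      proof cases
        case 1 then show ?thesis using False e1 by (simp add: \<Phi>'_def)
      next
        case 2 then have "c j (\<Phi> j) {x,z} \<noteq> {x}" "c j (\<Phi> j) {x,z} \<noteq> {x,z}" using d by auto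
        moreover have "c j (e3 j) {x,z} = {z}" using e3 by (simp add: insert_commute)
        ultimately show ?thesis using 2 False by (simp add: \<Phi>'_def)
      next
        case 3 then have "c j (\<Phi> j) {x,z} \<noteq> {x}" using d by auto
        then show ?thesis using 3 False e2 by (simp add: \<Phi>'_def)
      qed
    qed
  qed
  have dxy: "\<forall>i\<in>D. c i (\<Phi>' i) {x,y} = {x}" using eD by (simp add: \<Phi>'_def)
  have e3yx: "\<And>j. c j (e3 j) {x,y} = {y}"
    using cT1[of y z x _ "e3 _"] e3 d by (auto simp: insert_commute)
  have oxy: "\<forall>j\<in>N-D. c j (\<Phi>' j) {x,y} = {y}"
    using e1 e2 e3yx by (auto simp: \<Phi>'_def insert_commute)
  have e1yz: "\<And>j. c j (e1 j) {y,z} = {y}"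
    using cT1[of y x z _ "e1 _"] e1 d by (auto simp: insert_commute)
  have e2yz: "\<And>j. c j (e2 j) {y,z} = {y}"
    using cT1[of y x z _ "e2 _"] e2 d by (auto simp: insert_commute)
  have ayz: "\<forall>i\<in>N. c i (\<Phi>' i) {y,z} = {y}"
    using eD e1yz e2yz e3 by (auto simp: \<Phi>'_def)
  have g1: "C N \<Phi>' {x,y} = {x}" using LD dxy oxy unfolding LDp_def by blast
  have g2: "C N \<Phi>' {y,z} = {y}" using Pareto[of y z \<Phi>'] ayz d by auto
  have g3: "C N \<Phi>' {x,z} = {x}" using T1[OF soc, of x y z \<Phi>'] g1 g2 d by auto
  show "C N \<Phi> {x,z} = {x}" using IIA[OF agree] g3 by simp
qed

lemma stepB:
  assumes LD: "LDp x y" and d: "x\<noteq>y" "z\<noteq>x" "z\<noteq>y"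
  shows "DDp z y"
  unfolding DDp_def
proof (intro allI impI)
  fix \<Phi> assume hD: "\<forall>i\<in>D. c i (\<Phi> i) {z,y} = {z}"
  obtain eD where eD: "\<forall>i. c i (eD i) {z,x} = {z} \<and> c i (eD i) {x,y} = {x}" using chIV[of z x y] d by metis
  obtain e1 where e1: "\<forall>i. c i (e1 i) {z,y} = {z} \<and> c i (e1 i) {y,x} = {y}" using chIV[of z y x] d by metis
  obtain e2 where e2: "\<forall>i. c i (e2 i) {z,y} = {z,y} \<and> c i (e2 i) {y,x} = {y}" using chII[of z y x] d by metis
  obtain e3 where e3: "\<forall>i. c i (e3 i) {y,z} = {y} \<and> c i (e3 i) {z,x} = {z}" using chIV[of y z x] d by metis
  define \<Phi>' where "\<Phi>' = (\<lambda>i. if i\<in>D then eD i else if c i (\<Phi> i) {z,y} = {z} then e1 i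
      else if c i (\<Phi> i) {z,y} = {z,y} then e2 i else e3 i)"
  have agree: "\<forall>j\<in>N. c j (\<Phi> j) {z,y} = c j (\<Phi>' j) {z,y}"
  proof
    fix j assume j: "j\<in>N"
    show "c j (\<Phi> j) {z,y} = c j (\<Phi>' j) {z,y}"
    proof (cases "j\<in>D")
      case True
      have "c j (eD j) {z,y} = {z}" using cT1[of z x y j "eD j"] eD d by auto
      then show ?thesis using True hD by (simp add: \<Phi>'_def)
    next
      case False
      consider "c j (\<Phi> j) {z,y} = {z}" | "c j (\<Phi> j) {z,y} = {y}" | "c j (\<Phi> j) {z,y} = {z,y}"
        using c_pair by blast
      then show ?thesis
      proof cases
        case 1 then show ?thesis using False e1 by (simp add: \<Phi>'_def)
      next
        case 2 then have "c j (\<Phi> j) {z,y} \<noteq> {z}" "c j (\<Phi> j) {z,y} \<noteq> {z,y}" using d by auto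
        moreover have "c j (e3 j) {z,y} = {y}" using e3 by (simp add: insert_commute)
        ultimately show ?thesis using 2 False by (simp add: \<Phi>'_def)
      next
        case 3 then have "c j (\<Phi> j) {z,y} \<noteq> {z}" using d by auto
        then show ?thesis using 3 False e2 by (simp add: \<Phi>'_def)
      qed
    qed
  qed
  have dxy: "\<forall>i\<in>D. c i (\<Phi>' i) {x,y} = {x}" using eD by (simp add: \<Phi>'_def)
  have e3yx: "\<And>j. c j (e3 j) {x,y} = {y}"
    using cT1[of y z x _ "e3 _"] e3 d by (auto simp: insert_commute)
  have oxy: "\<forall>j\<in>N-D. c j (\<Phi>' j) {x,y} = {y}"
    using e1 e2 e3yx by (auto simp: \<Phi>'_def insert_commute)
  have e1zx: "\<And>j. c j (e1 j) {z,x} = {z}"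
    using cT1[of z y x _ "e1 _"] e1 d by (auto simp: insert_commute)
  have e2zx: "\<And>j. c j (e2 j) {z,x} = {z}"
    using cT2[of z y x _ "e2 _"] e2 d by (auto simp: insert_commute)
  have azx: "\<forall>i\<in>N. c i (\<Phi>' i) {z,x} = {z}"
    using eD e1zx e2zx e3 by (auto simp: \<Phi>'_def)
  have g1: "C N \<Phi>' {x,y} = {x}" using LD dxy oxy unfolding LDp_def by blast
  have g2: "C N \<Phi>' {z,x} = {z}" using Pareto[of z x \<Phi>'] azx d by auto
  have g3: "C N \<Phi>' {z,y} = {z}" using T1[OF soc, of z x y \<Phi>'] g1 g2 d by auto
  show "C N \<Phi> {z,y} = {z}" using IIA[OF agree] g3 by simp
qed


lemma fresh: "\<exists>z::'p set. z \<noteq> a \<and> z \<noteq> b"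
proof (rule ccontr)
  assume "\<not> ?thesis"
  then have "(UNIV :: 'p set set) \<subseteq> {a,b}" by blast
  then have "card (UNIV :: 'p set set) \<le> card {a,b}" by (rule card_mono[rotated]) simp
  also have "\<dots> \<le> 2" by (simp add: card_insert_if)
  finally have le: "card (UNIV :: 'p set set) \<le> 2" .
  have "card (UNIV :: 'p set set) = 2 ^ card (UNIV :: 'p set)"
    by (metis Pow_UNIV card_Pow finite)
  moreover have "card (UNIV :: 'p set) \<ge> 2" using es unfolding es_space_def by blast
  ultimately have "card (UNIV :: 'p set set) \<ge> 2 ^ 2"
    by (metis power_increasing_iff one_less_numeral_iff semiring_norm(76) numeral_le_iff)
  then show False using le by simp
qed

lemma all_DD:
  assumes LD: "LDp x y" and xy: "x \<noteq> y" and uv: "u \<noteq> v"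
  shows "DDp u v"
proof -
  obtain z where z: "z \<noteq> x" "z \<noteq> y" using fresh[of x y] by blast
  have yx': "y \<noteq> x" using xy by simp
  have zx: "x \<noteq> z" "y \<noteq> z" using z by auto
  have zy: "DDp z y" using stepB[OF LD xy z] .
  have zx2: "DDp z x" using stepA[OF DD_LD[OF zy] z(2) zx(1) xy] .
  have yx: "DDp y x" using stepB[OF DD_LD[OF zx2] z(1) zx(2) yx'] .
  show ?thesis
  proof (cases "u = x")
    case ux: True
    show ?thesis
    proof (cases "v = y")
      case True
      have "DDp x z" using stepA[OF LD xy z] .
      from stepA[OF DD_LD[OF this] zx(1) yx' zx(2)] show ?thesis using ux True by simp
    next
      case False
      have "v \<noteq> x" using uv ux by simp
      from stepA[OF LD xy this False] show ?thesis using ux by simp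
    qed
  next
    case ux: False
    show ?thesis
    proof (cases "u = y")
      case uy: True
      show ?thesis
      proof (cases "v = x")
        case True then show ?thesis using yx uy by simp
      next
        case False
        have "v \<noteq> y" using uv uy by simp
        from stepA[OF DD_LD[OF yx] yx' this False] show ?thesis using uy by simp
      qed
    next
      case uy: False
      show ?thesis
      proof (cases "v = y")
        case True from stepB[OF LD xy ux uy] show ?thesis using True by simp
      next
        case vy: False
        show ?thesis
        proof (cases "v = x")
          case True from stepB[OF DD_LD[OF yx] yx' uy ux] show ?thesis using True by simp
        next
          case vx: False
          have "DDp x v" using stepA[OF LD xy vx vy] .
          have xv: "x \<noteq> v" using vx by simp
          from stepB[OF DD_LD[OF \<open>DDp x v\<close>] xv ux uv] show ?thesis .
        qed
      qed
    qed
  qed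
qed

lemma LD_given:
  assumes d: "w \<noteq> w'" and m1: "models (B Eww') = {w,w'}" and m2: "models (B Ew') = {w'}"
    and L: "locally_decisive B nabla N D Eww' Ew'"
  shows "LDp w w'"
  unfolding LDp_def
proof (intro allI impI)
  fix \<Phi> assume hD: "\<forall>i\<in>D. c i (\<Phi> i) {w,w'} = {w}" and hO: "\<forall>j\<in>N - D. c j (\<Phi> j) {w,w'} = {w'}"
  have mi: "\<And>i. models (B (single nabla i (\<Phi> i) Eww')) = c i (\<Phi> i) {w,w'}" using c_eq[OF m1] .
  have 1: "\<forall>i\<in>D. entails (Conj (B (single nabla i (\<Phi> i) Eww')) (B Ew')) Bot"
    using hD d by (simp add: entails_Bot models_Conj mi m2)
  have 2: "\<forall>j\<in>N - D. fequiv (B (single nabla j (\<Phi> j) Eww')) (B Ew')"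
    using hO by (simp add: fequiv_iff mi m2)
  have fD: "finite D" using soc DN finite_subset unfolding society_def by blast
  have 3: "consistent (bigConj (map (\<lambda>i. B (single nabla i (\<Phi> i) Eww')) (sorted_list_of_set D)))"
    using hD fD by (auto simp: consistent_iff models_bigConj mi)
  have LL: "(\<forall>i\<in>D. entails (Conj (B (single nabla i (\<Phi> i) Eww')) (B Ew')) Bot)
       \<longrightarrow> (\<forall>j\<in>N - D. fequiv (B (single nabla j (\<Phi> j) Eww')) (B Ew'))
       \<longrightarrow> consistent (bigConj (map (\<lambda>i. B (single nabla i (\<Phi> i) Eww')) (sorted_list_of_set D)))
       \<longrightarrow> entails (Conj (B (nabla N \<Phi> Eww')) (B Ew')) Bot"
    using L unfolding locally_decisive_def by (rule spec)
  have "entails (Conj (B (nabla N \<Phi> Eww')) (B Ew')) Bot" using LL 1 2 3 by blast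
  then have "C N \<Phi> {w,w'} \<inter> {w'} = {}" by (simp add: entails_Bot models_Conj m2 C_eq[OF soc m1])
  moreover have "C N \<Phi> {w,w'} \<subseteq> {w,w'}" by (rule C_sub[OF soc]) simp
  moreover note C_ne[of N \<Phi> "{w,w'}"]
  ultimately show "C N \<Phi> {w,w'} = {w}" by blast
qed

lemma final:
  assumes DD: "\<And>u v. u \<noteq> v \<Longrightarrow> DDp u v"
  shows "decisive B nabla N D E E'"
  unfolding decisive_def
proof (intro allI impI)
  fix \<Phi>
  assume h1: "\<forall>i\<in>D. entails (Conj (B (single nabla i (\<Phi> i) E)) (B E')) Bot"
    and h2: "consistent (bigConj (map (\<lambda>i. B (single nabla i (\<Phi> i) E)) (sorted_list_of_set D)))"
  show "entails (Conj (B (nabla N \<Phi> E)) (B E')) Bot"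
  proof (rule ccontr)
    assume "\<not> ?thesis"
    then obtain v where v1: "v \<in> models (B (nabla N \<Phi> E))" and v2: "v \<in> models (B E')"
      by (auto simp: entails_Bot models_Conj)
    define X where "X = models (B E)"
    have Xne: "X \<noteq> {}" using nonempty X_def by simp
    have mi: "\<And>i. models (B (single nabla i (\<Phi> i) E)) = c i (\<Phi> i) X" using c_eq X_def by simp
    have mN: "models (B (nabla N \<Phi> E)) = C N \<Phi> X" using C_eq[OF soc] X_def by simp
    have fD: "finite D" using soc DN finite_subset unfolding society_def by blast
    obtain u where u: "\<forall>i\<in>D. u \<in> c i (\<Phi> i) X"
      using h2 fD by (auto simp: consistent_iff models_bigConj mi)
    have dis: "\<forall>i\<in>D. c i (\<Phi> i) X \<inter> models (B E') = {}"
      using h1 by (simp add: entails_Bot models_Conj mi)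
    obtain b :: "'p set" where bb: "b \<noteq> {}" using fresh[of "{}" "{}"] by blast
    define a :: "'p set" where "a = {}"
    have ab: "a \<noteq> b" using bb a_def by simp
    have Dne: "D \<noteq> {}"
    proof
      assume "D = {}"
      have ba: "b \<noteq> a" using ab by simp
      have "DDp a b" "DDp b a" using DD[OF ab] DD[OF ba] .
      then have "C N \<Phi> {a,b} = {a}" "C N \<Phi> {b,a} = {b}" unfolding DDp_def using \<open>D = {}\<close> by blast+
      then show False using ab by (metis insert_commute singleton_inject)
    qed
    then obtain i0 where i0: "i0 \<in> D" by blast
    have uX: "u \<in> X" using u i0 C_sub[OF soc_single Xne] unfolding c_def by blast
    have uE': "u \<notin> models (B E')" using u dis i0 by blast
    have uv: "u \<noteq> v" using uE' v2 by blast
    have vX: "v \<in> X" using v1 mN C_sub[OF soc Xne] by blast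
    have g: "C N \<Phi> {u,v} = C N \<Phi> X \<inter> {u,v}"
      by (rule C_restr[OF soc]) (use uX vX v1 mN in auto)
    have ind: "\<forall>i\<in>D. c i (\<Phi> i) {u,v} = {u}"
    proof
      fix i assume i: "i \<in> D"
      have "c i (\<Phi> i) {u,v} = c i (\<Phi> i) X \<inter> {u,v}"
        unfolding c_def by (rule C_restr[OF soc_single]) (use uX vX u i in \<open>auto simp: c_def\<close>)
      then show "c i (\<Phi> i) {u,v} = {u}" using u i dis v2 by blast
    qed
    have "C N \<Phi> {u,v} = {u}" using DD[OF uv] ind unfolding DDp_def by blast
    then show False using g v1 mN uv by blast
  qed
qed

end
theorem theorem5:
  fixes B :: "'e \<Rightarrow> 'p::finite form"
    and nabla :: "'i::wellorder set \<Rightarrow> ('i \<Rightarrow> 'e) \<Rightarrow> 'e \<Rightarrow> 'e"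
    and N D :: "'i set"
    and w w' :: "'p set"
    and Eww' Ew' :: 'e
  assumes "es_space B"
    and "basic_fusion B nabla"
    and "esf_sd B nabla"
    and "esf_p B nabla"
    and "esf_i B nabla"
    and "society N"
    and "D \<subseteq> N"
    and "w \<noteq> w'"
    and "models (B Eww') = {w, w'}"
    and "models (B Ew') = {w'}"
    and "locally_decisive B nabla N D Eww' Ew'"
  shows "\<forall>E E'. decisive B nabla N D E E'"
proof -
  interpret setting B nabla N D using assms(1-7) by unfold_locales
  have LD: "LDp w w'" by (rule LD_given[OF assms(8-11)])
  have "\<And>u v. u \<noteq> v \<Longrightarrow> DDp u v" using all_DD[OF LD assms(8)] .
  then show ?thesis using final by blast
qed

end
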